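(* Let $T=(T_a,T_b)$ be the GFB tree with $n\geq 2$ leaves. Then $T_a$ and $T_b$ are also GFB trees (i.e. $T_a=T^{gfb}_{n_a}$ and $T_b=T^{gfb}_{n_b}$, where $n_a,n_b$ are their numbers of leaves).
   Context: A rooted binary tree with $n\geq 2$ leaves is a rooted tree whose root has degree 2 and all other internal nodes have degree 3; for $n=1$ it is a single node. Trees are considered up to isomorphism. $T=(T_a,T_b)$ denotes the decomposition into the subtrees rooted at the two children of the root. The GFB tree $T_n^{gfb}$ is the output of: start with $n$ single-node trees; while more than one tree remains, remove a tree $u$ of minimal size (number of leaves), then remove a tree $v$ of minimal size among the remaining ones, and insert the tree with a new root whose children are the roots of $u$ and $v$; output the remaining tree. *)

theory Defs
  imports Main "HOL-Library.Multiset"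
begin

text \<open>Rooted binary trees (plane representation); isomorphism of rooted trees
  is captured by the relation tree_iso, which allows swapping children.\<close>

datatype tree = Leaf | Node tree tree

fun leaves :: "tree \<Rightarrow> nat" where
  "leaves Leaf = 1"
| "leaves (Node a b) = leaves a + leaves b"

inductive tree_iso :: "tree \<Rightarrow> tree \<Rightarrow> bool" where
  iso_leaf: "tree_iso Leaf Leaf"
| iso_same: "tree_iso a a' \<Longrightarrow> tree_iso b b' \<Longrightarrow> tree_iso (Node a b) (Node a' b')"
| iso_swap: "tree_iso a b' \<Longrightarrow> tree_iso b a' \<Longrightarrow> tree_iso (Node a b) (Node a' b')"

definition gfb_step :: "tree multiset \<Rightarrow> tree multiset \<Rightarrow> bool" where
  "gfb_step M M' \<longleftrightarrow>
     (\<exists>u v. u \<in># M \<and> (\<forall>w \<in># M. leaves u \<le> leaves w) \<and>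
            v \<in># M - {#u#} \<and> (\<forall>w \<in># M - {#u#}. leaves v \<le> leaves w) \<and>
            M' = M - {#u, v#} + {#Node u v#})"

definition gfb_output :: "nat \<Rightarrow> tree \<Rightarrow> bool" where
  "gfb_output n T \<longleftrightarrow> gfb_step\<^sup>*\<^sup>* (replicate_mset n Leaf) {#T#}"

end

theory Submission
  imports Defs
begin

lemma tree_iso_refl: "tree_iso t t"
  by (induction t) (auto intro: tree_iso.intros)

lemma pair_sub: "u \<in># M \<Longrightarrow> v \<in># M - {#u#} \<Longrightarrow> M = (M - {#u, v#}) + {#u, v#}"
proof -
  assume a: "u \<in># M" "v \<in># M - {#u#}"
  then have "{#u, v#} \<subseteq># M"
    by (metis single_subset_iff insert_subset_eq_iff)
  then show ?thesis by (rule subset_mset.diff_add[symmetric])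
qed

lemma swap_aux: "X \<in># A' \<Longrightarrow> N0 + {#X#} = A' + B' \<Longrightarrow> N0 + {#u,v#} = (A' - {#X#} + {#u,v#}) + B'"
  by (smt (verit, del_insts) add.assoc add.commute add_mset_add_single
    add_mset_remove_trivial insert_DiffM)

lemma single_aux: "{#T#} = N0 + {#Node u v#} \<Longrightarrow> N0 = {#} \<and> T = Node u v"
  by simp

lemma step_sum:
  assumes "gfb_step M M'"
  shows "sum_mset (image_mset leaves M') = sum_mset (image_mset leaves M)"
proof -
  obtain u v where u: "u \<in># M" and v: "v \<in># M - {#u#}" and M': "M' = M - {#u, v#} + {#Node u v#}"
    using assms unfolding gfb_step_def by blast
  obtain M0 where M: "M = M0 + {#u, v#}" and M'': "M' = M0 + {#Node u v#}"
    using pair_sub[OF u v] M' by blast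
  show ?thesis unfolding M M'' by simp
qed

lemma steps_sum:
  "gfb_step\<^sup>*\<^sup>* M M' \<Longrightarrow> sum_mset (image_mset leaves M') = sum_mset (image_mset leaves M)"
  by (induction rule: rtranclp_induct) (auto dest: step_sum)

lemma split_back:
  assumes "gfb_step\<^sup>*\<^sup>* M N"
  shows "\<And>A' B'. N = A' + B' \<Longrightarrow> \<exists>A B. M = A + B \<and> gfb_step\<^sup>*\<^sup>* A A' \<and> gfb_step\<^sup>*\<^sup>* B B'"
  using assms
proof (induction rule: rtranclp_induct)
  case base
  then show ?case by blast
next
  case (step N N')
  obtain u v where u: "u \<in># N" and umin: "\<forall>w \<in># N. leaves u \<le> leaves w"
    and v: "v \<in># N - {#u#}" and vmin: "\<forall>w \<in># N - {#u#}. leaves v \<le> leaves w"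
    and N': "N' = N - {#u, v#} + {#Node u v#}"
    using step.hyps(2) unfolding gfb_step_def by blast
  obtain N0 where N: "N = N0 + {#u, v#}" and N'': "N' = N0 + {#Node u v#}"
    using pair_sub[OF u v] N' by blast
  have e: "N0 + {#Node u v#} = A' + B'" using N'' step.prems by simp
  have e': "N0 + {#Node u v#} = B' + A'" using e by (simp add: add.commute)
  have "Node u v \<in># N'" using N' by simp
  then have "Node u v \<in># A' + B'" using step.prems by simp
  then consider "Node u v \<in># A'" | "Node u v \<in># B'" by auto
  then show ?case
  proof cases
    case 1
    define A'' where "A'' = A' - {#Node u v#} + {#u, v#}"
    have NA: "N = A'' + B'"
      unfolding A''_def N by (rule swap_aux[OF 1 e])
    have "gfb_step A'' A'"
      unfolding gfb_step_def
    proof (intro exI conjI)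
      show "u \<in># A''" by (simp add: A''_def)
      show "\<forall>w\<in>#A''. leaves u \<le> leaves w" using umin NA by auto
      show "v \<in># A'' - {#u#}" by (simp add: A''_def)
      have uX: "u \<in># A''" by (simp add: A''_def)
      have "N - {#u#} = B' + (A'' - {#u#})" unfolding NA using diff_union_single_conv[OF uX, of B'] by (simp add: add.commute)
      then show "\<forall>w\<in>#A'' - {#u#}. leaves v \<le> leaves w" using vmin by auto
      show "A' = A'' - {#u, v#} + {#Node u v#}" using 1 by (simp add: A''_def)
    qed
    note st = this
    obtain A B where h: "M = A + B" "gfb_step\<^sup>*\<^sup>* A A''" "gfb_step\<^sup>*\<^sup>* B B'"
      using step.IH[OF NA] by blast
    have "gfb_step\<^sup>*\<^sup>* A A'" using h(2) st by (rule rtranclp.rtrancl_into_rtrancl)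
    with h show ?thesis by blast
  next
    case 2
    define B'' where "B'' = B' - {#Node u v#} + {#u, v#}"
    have NB: "N = A' + B''"
      unfolding B''_def N by (subst add.commute) (rule swap_aux[OF 2 e'])
    have "gfb_step B'' B'"
      unfolding gfb_step_def
    proof (intro exI conjI)
      show "u \<in># B''" by (simp add: B''_def)
      show "\<forall>w\<in>#B''. leaves u \<le> leaves w" using umin NB by auto
      show "v \<in># B'' - {#u#}" by (simp add: B''_def)
      have uX: "u \<in># B''" by (simp add: B''_def)
      have "N - {#u#} = A' + (B'' - {#u#})" unfolding NB using diff_union_single_conv[OF uX, of A'] by simp
      then show "\<forall>w\<in>#B'' - {#u#}. leaves v \<le> leaves w" using vmin by auto
      show "B' = B'' - {#u, v#} + {#Node u v#}" using 2 by (simp add: B''_def)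
    qed
    note st = this
    obtain A B where h: "M = A + B" "gfb_step\<^sup>*\<^sup>* A A'" "gfb_step\<^sup>*\<^sup>* B B''"
      using step.IH[OF NB] by blast
    have "gfb_step\<^sup>*\<^sup>* B B'" using h(3) st by (rule rtranclp.rtrancl_into_rtrancl)
    with h show ?thesis by blast
  qed
qed

lemma part_output:
  assumes "replicate_mset n Leaf = A + B" "gfb_step\<^sup>*\<^sup>* A {#t#}"
  shows "gfb_output (leaves t) t"
proof -
  have "set_mset A \<subseteq> {Leaf}" using assms(1)
    by (metis union_iff set_mset_replicate_mset_subset subsetI empty_iff)
  then have A: "A = replicate_mset (size A) Leaf"
    by (metis set_mset_subset_singletonD)
  have "sum_mset (image_mset leaves A) = size A"
    by (subst A) simp
  moreover have "sum_mset (image_mset leaves A) = leaves t"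
    using steps_sum[OF assms(2)] by simp
  ultimately have "A = replicate_mset (leaves t) Leaf" using A by simp
  then show ?thesis using assms(2) unfolding gfb_output_def by simp
qed

theorem lemma6:
  assumes "n \<ge> 2" and "gfb_output n T"
  shows "\<exists>Ta Tb. T = Node Ta Tb
           \<and> (\<exists>S. gfb_output (leaves Ta) S \<and> tree_iso Ta S)
           \<and> (\<exists>S. gfb_output (leaves Tb) S \<and> tree_iso Tb S)"
proof -
  have r: "gfb_step\<^sup>*\<^sup>* (replicate_mset n Leaf) {#T#}" using assms(2) unfolding gfb_output_def .
  have ne: "replicate_mset n Leaf \<noteq> {#T#}"
  proof
    assume "replicate_mset n Leaf = {#T#}"
    then have "size (replicate_mset n Leaf) = size {#T#}" by simp
    then show False using assms(1) by simp
  qed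
  from r have "replicate_mset n Leaf = {#T#} \<or> (\<exists>N. gfb_step\<^sup>*\<^sup>* (replicate_mset n Leaf) N \<and> gfb_step N {#T#})"
    by (rule rtranclp.cases) auto
  with ne obtain N where r1: "gfb_step\<^sup>*\<^sup>* (replicate_mset n Leaf) N" and st: "gfb_step N {#T#}"
    by auto
  obtain u v where u: "u \<in># N" and v: "v \<in># N - {#u#}" and T: "{#T#} = N - {#u, v#} + {#Node u v#}"
    using st unfolding gfb_step_def by blast
  have N: "N = (N - {#u, v#}) + {#u, v#}" using pair_sub[OF u v] .
  have "N - {#u, v#} = {#}" and TT: "T = Node u v" using single_aux[OF T] by auto
  with N have "N = {#u#} + {#v#}" by simp
  from split_back[OF r1 this] obtain A B where
    AB: "replicate_mset n Leaf = A + B" and A: "gfb_step\<^sup>*\<^sup>* A {#u#}" and B: "gfb_step\<^sup>*\<^sup>* B {#v#}"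
    by blast
  have gu1: "gfb_output (leaves u) u" using part_output[OF AB A] .
  have gu2: "gfb_output (leaves v) v" using part_output[of n B A v] AB B by (simp add: add.commute)
  show ?thesis unfolding TT
  proof (intro exI conjI)
    show "Node u v = Node u v" by (rule refl)
    show "gfb_output (leaves u) u" by (rule gu1)
    show "gfb_output (leaves v) v" by (rule gu2)
    show "tree_iso u u" by (rule tree_iso_refl)
    show "tree_iso v v" by (rule tree_iso_refl)
  qed
qed

end
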